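(* The category $\mathcal B$ is equivalent to the 2-groupoid $\mathcal K_G$ of $G=\mathbb Z$. The category $\mathcal B_n$ is equivalent to $\mathcal K_G$ for $G=\mathbb Z/n\mathbb Z$.
   Context: For a group $G$, the 2-groupoid $\mathcal K_G$ is the monoidal category whose objects are the elements of $G$, with monoidal product given by multiplication, and whose only morphisms are identity morphisms. $\mathcal B$ is the (non-linear) strict monoidal category whose objects are generated by two objects $\Omega^+,\Omega^-$ (drawn as upward and downward oriented strands), and whose morphisms are planar diagrams generated by the four oriented cups and caps (units/counits of adjunctions in both directions between $\Omega^+$ and $\Omega^-$), modulo the relations: the zigzag (isotopy) relations for these adjunctions; each closed oriented circle (of either orientation) equals the empty diagram; and the identity of $\Omega^+\otimes\Omega^-$ (and of $\Omega^-\otimes\Omega^+$) equals the composite of the appropriate cap followed by the appropriate cup. Only diagrams (not linear combinations) are morphisms. For $n\ge2$, $\mathcal B_n$ is obtained from $\mathcal B$ by adding two further generating morphisms, black $n$-valent vertices $\Omega^+\otimes\cdots\otimes\Omega^+\ (n\text{ factors})\to\mathbb 1$ and $\mathbb 1\to(\Omega^+)^{\otimes n}$, with relations: these vertices are cyclic and invariant under rotation (and similarly for the orientation-reversed versions); the composite of the two vertices in either order equals the identity (of $\mathbb 1$, respectively of $(\Omega^+)^{\otimes n}$). *)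

theory Defs
  imports "HOL-Algebra.Elementary_Groups"
begin

text \<open>Up = Omega+, Dn = Omega-. Objects of B and B_n are words in Up/Dn
  (the tensor product is concatenation, the unit is the empty word).\<close>

datatype orient = Up | Dn

text \<open>Generating morphisms:
  CupL : 1 -> Up Dn,   CapL : Dn Up -> 1   (one adjunction),
  CupR : 1 -> Dn Up,   CapR : Up Dn -> 1   (the other adjunction),
  VOut n : Up^n -> 1,  VIn n : 1 -> Up^n   (black n-valent vertices).\<close>

datatype gen = CupL | CapL | CupR | CapR | VOut nat | VIn nat

fun gdom :: "gen \<Rightarrow> orient list" where
  "gdom CupL = []"
| "gdom CapL = [Dn, Up]"
| "gdom CupR = []"
| "gdom CapR = [Up, Dn]"
| "gdom (VOut n) = replicate n Up"
| "gdom (VIn n) = []"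

fun gcod :: "gen \<Rightarrow> orient list" where
  "gcod CupL = [Up, Dn]"
| "gcod CapL = []"
| "gcod CupR = [Dn, Up]"
| "gcod CapR = []"
| "gcod (VOut n) = []"
| "gcod (VIn n) = replicate n Up"

text \<open>Formal diagram expressions; Comp f g means "first f, then g".\<close>

datatype dgm = Idt "orient list" | Gen gen | Comp dgm dgm | Tens dgm dgm

fun ddom :: "dgm \<Rightarrow> orient list" where
  "ddom (Idt a) = a"
| "ddom (Gen g) = gdom g"
| "ddom (Comp f g) = ddom f"
| "ddom (Tens f g) = ddom f @ ddom g"

fun dcod :: "dgm \<Rightarrow> orient list" where
  "dcod (Idt a) = a"
| "dcod (Gen g) = gcod g"
| "dcod (Comp f g) = dcod g"
| "dcod (Tens f g) = dcod f @ dcod g"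

fun valid :: "gen set \<Rightarrow> dgm \<Rightarrow> bool" where
  "valid Gs (Idt a) = True"
| "valid Gs (Gen g) = (g \<in> Gs)"
| "valid Gs (Comp f g) = (valid Gs f \<and> valid Gs g \<and> dcod f = ddom g)"
| "valid Gs (Tens f g) = (valid Gs f \<and> valid Gs g)"

text \<open>Morphisms
  u -> v of the presented category are the eqv-classes of valid expressions
  with domain u and codomain v.\<close>

inductive eqv :: "gen set \<Rightarrow> (dgm \<times> dgm) set \<Rightarrow> dgm \<Rightarrow> dgm \<Rightarrow> bool"
  for Gs :: "gen set" and Rs :: "(dgm \<times> dgm) set" where
  refl: "valid Gs f \<Longrightarrow> eqv Gs Rs f f"
| sym: "eqv Gs Rs f g \<Longrightarrow> eqv Gs Rs g f"
| trans: "eqv Gs Rs f g \<Longrightarrow> eqv Gs Rs g h \<Longrightarrow> eqv Gs Rs f h"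
| comp_cong: "eqv Gs Rs f f' \<Longrightarrow> eqv Gs Rs g g' \<Longrightarrow> dcod f = ddom g \<Longrightarrow>
     eqv Gs Rs (Comp f g) (Comp f' g')"
| tens_cong: "eqv Gs Rs f f' \<Longrightarrow> eqv Gs Rs g g' \<Longrightarrow> eqv Gs Rs (Tens f g) (Tens f' g')"
| comp_assoc: "valid Gs f \<Longrightarrow> valid Gs g \<Longrightarrow> valid Gs h \<Longrightarrow> dcod f = ddom g \<Longrightarrow>
     dcod g = ddom h \<Longrightarrow> eqv Gs Rs (Comp (Comp f g) h) (Comp f (Comp g h))"
| id_left: "valid Gs f \<Longrightarrow> eqv Gs Rs (Comp (Idt (ddom f)) f) f"
| id_right: "valid Gs f \<Longrightarrow> eqv Gs Rs (Comp f (Idt (dcod f))) f"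
| tens_assoc: "valid Gs f \<Longrightarrow> valid Gs g \<Longrightarrow> valid Gs h \<Longrightarrow>
     eqv Gs Rs (Tens (Tens f g) h) (Tens f (Tens g h))"
| unit_left: "valid Gs f \<Longrightarrow> eqv Gs Rs (Tens (Idt []) f) f"
| unit_right: "valid Gs f \<Longrightarrow> eqv Gs Rs (Tens f (Idt [])) f"
| tens_id: "eqv Gs Rs (Tens (Idt a) (Idt b)) (Idt (a @ b))"
| interchange: "valid Gs f \<Longrightarrow> valid Gs f' \<Longrightarrow> valid Gs g \<Longrightarrow> valid Gs g' \<Longrightarrow>
     dcod f = ddom f' \<Longrightarrow> dcod g = ddom g' \<Longrightarrow>
     eqv Gs Rs (Comp (Tens f g) (Tens f' g')) (Tens (Comp f f') (Comp g g'))"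
| rel: "(s, t) \<in> Rs \<Longrightarrow> eqv Gs Rs s t"

definition B_gens :: "gen set" where
  "B_gens = {CupL, CapL, CupR, CapR}"

definition B_rels :: "(dgm \<times> dgm) set" where
  "B_rels =
    { \<comment> \<open>zigzag relations for the adjunction (CupL, CapL)\<close>
      (Comp (Tens (Gen CupL) (Idt [Up])) (Tens (Idt [Up]) (Gen CapL)), Idt [Up]),
      (Comp (Tens (Idt [Dn]) (Gen CupL)) (Tens (Gen CapL) (Idt [Dn])), Idt [Dn]),
      \<comment> \<open>zigzag relations for the adjunction (CupR, CapR)\<close>
      (Comp (Tens (Gen CupR) (Idt [Dn])) (Tens (Idt [Dn]) (Gen CapR)), Idt [Dn]),
      (Comp (Tens (Idt [Up]) (Gen CupR)) (Tens (Gen CapR) (Idt [Up])), Idt [Up]),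
      \<comment> \<open>closed circles of both orientations equal the empty diagram\<close>
      (Comp (Gen CupL) (Gen CapR), Idt []),
      (Comp (Gen CupR) (Gen CapL), Idt []),
      \<comment> \<open>identity of Up Dn / Dn Up equals cap followed by cup\<close>
      (Idt [Up, Dn], Comp (Gen CapR) (Gen CupL)),
      (Idt [Dn, Up], Comp (Gen CapL) (Gen CupR)) }"

definition Bn_gens :: "nat \<Rightarrow> gen set" where
  "Bn_gens n = B_gens \<union> {VOut n, VIn n}"

definition Bn_rels :: "nat \<Rightarrow> (dgm \<times> dgm) set" where
  "Bn_rels n = B_rels \<union>
    { \<comment> \<open>cyclicity: rotating the vertex Up^n -> 1 by one strand leaves it unchanged\<close>
      (Comp (Comp (Tens (Gen CupR) (Idt (replicate n Up)))
                  (Tens (Tens (Idt [Dn]) (Gen (VOut n))) (Idt [Up])))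
            (Gen CapL),
       Gen (VOut n)),
      \<comment> \<open>cyclicity: rotating the vertex 1 -> Up^n by one strand leaves it unchanged\<close>
      (Comp (Comp (Gen CupR) (Tens (Tens (Idt [Dn]) (Gen (VIn n))) (Idt [Up])))
            (Tens (Gen CapL) (Idt (replicate n Up))),
       Gen (VIn n)),
      \<comment> \<open>the two composites of the vertices are identities\<close>
      (Comp (Gen (VIn n)) (Gen (VOut n)), Idt []),
      (Comp (Gen (VOut n)) (Gen (VIn n)), Idt (replicate n Up)) }"

text \<open>K_G: objects = carrier G, tensor = group multiplication, only identity
  morphisms.  Since all morphisms of K_G are identities, a monoidal functor
  F from the presented category to K_G is a monoid homomorphism on objects
  (the structure isomorphisms F(u)F(v) -> F(uv), 1 -> F(1) are identities)
  such that every morphism u -> v has F u = F v.  It is an equivalence iff it is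
  full (F u = F v implies Hom(u,v) nonempty), faithful (any two parallel
  morphisms are equal) and essentially surjective (isomorphisms in K_G are
  identities, so: surjective on objects).\<close>

definition monoidal_equiv_K ::
  "gen set \<Rightarrow> (dgm \<times> dgm) set \<Rightarrow> ('g, 'b) monoid_scheme \<Rightarrow> bool" where
  "monoidal_equiv_K Gs Rs G \<longleftrightarrow>
    (\<exists>F :: orient list \<Rightarrow> 'g.
        (\<forall>u. F u \<in> carrier G)
      \<and> F [] = \<one>\<^bsub>G\<^esub>
      \<and> (\<forall>u v. F (u @ v) = F u \<otimes>\<^bsub>G\<^esub> F v)
      \<and> (\<forall>t. valid Gs t \<longrightarrow> F (ddom t) = F (dcod t))
      \<and> (\<forall>u v. F u = F v \<longrightarrow> (\<exists>t. valid Gs t \<and> ddom t = u \<and> dcod t = v))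
      \<and> (\<forall>s t. valid Gs s \<and> valid Gs t \<and> ddom s = ddom t \<and> dcod s = dcod t
                \<longrightarrow> eqv Gs Rs s t)
      \<and> (\<forall>g \<in> carrier G. \<exists>u. F u = g))"

end

theory Submission
  imports Defs
begin


declare eqv.trans[trans]

definition wh :: "orient list \<Rightarrow> dgm \<Rightarrow> orient list \<Rightarrow> dgm" where
  "wh a f b = Tens (Tens (Idt a) f) (Idt b)"

lemma wh_simps[simp]: "valid Gs (wh a f b) = valid Gs f" "ddom (wh a f b) = a @ ddom f @ b"
  "dcod (wh a f b) = a @ dcod f @ b"
  by (auto simp: wh_def)

locale pres =
  fixes Gs :: "gen set" and Rs :: "(dgm \<times> dgm) set"
  assumes wfR: "\<And>s t. (s,t) \<in> Rs \<Longrightarrow> valid Gs s \<and> valid Gs t \<and> ddom s = ddom t \<and> dcod s = dcod t"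
begin

abbreviation eq (infix "\<approx>" 50) where "f \<approx> g \<equiv> eqv Gs Rs f g"

lemma typed: "f \<approx> g \<Longrightarrow> valid Gs f \<and> valid Gs g \<and> ddom f = ddom g \<and> dcod f = dcod g"
  by (induction rule: eqv.induct) (auto dest: wfR)

lemma tyv1: "f \<approx> g \<Longrightarrow> valid Gs f" and tyv2: "f \<approx> g \<Longrightarrow> valid Gs g"
  and tyd: "f \<approx> g \<Longrightarrow> ddom f = ddom g" and tyc: "f \<approx> g \<Longrightarrow> dcod f = dcod g"
  using typed by blast+

lemma rfl: "valid Gs f \<Longrightarrow> f \<approx> f" by (rule eqv.refl)
lemma sy: "f \<approx> g \<Longrightarrow> g \<approx> f" by (rule eqv.sym)

lemma cl: "f \<approx> f' \<Longrightarrow> valid Gs g \<Longrightarrow> dcod f = ddom g \<Longrightarrow> Comp f g \<approx> Comp f' g"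
  by (rule eqv.comp_cong) (auto intro: eqv.refl)
lemma cr: "g \<approx> g' \<Longrightarrow> valid Gs f \<Longrightarrow> dcod f = ddom g \<Longrightarrow> Comp f g \<approx> Comp f g'"
  by (rule eqv.comp_cong) (auto intro: eqv.refl)
lemma tl: "f \<approx> f' \<Longrightarrow> valid Gs g \<Longrightarrow> Tens f g \<approx> Tens f' g"
  by (rule eqv.tens_cong) (auto intro: eqv.refl)
lemma tr: "g \<approx> g' \<Longrightarrow> valid Gs f \<Longrightarrow> Tens f g \<approx> Tens f g'"
  by (rule eqv.tens_cong) (auto intro: eqv.refl)

lemma assoc: "valid Gs f \<Longrightarrow> valid Gs g \<Longrightarrow> valid Gs h \<Longrightarrow> dcod f = ddom g \<Longrightarrow>
     dcod g = ddom h \<Longrightarrow> Comp (Comp f g) h \<approx> Comp f (Comp g h)"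
  by (rule eqv.comp_assoc)
lemma assoc': "valid Gs f \<Longrightarrow> valid Gs g \<Longrightarrow> valid Gs h \<Longrightarrow> dcod f = ddom g \<Longrightarrow>
     dcod g = ddom h \<Longrightarrow> Comp f (Comp g h) \<approx> Comp (Comp f g) h"
  by (rule sy, rule eqv.comp_assoc)
lemma idl: "valid Gs f \<Longrightarrow> a = ddom f \<Longrightarrow> Comp (Idt a) f \<approx> f"
  using eqv.id_left by blast
lemma idr: "valid Gs f \<Longrightarrow> a = dcod f \<Longrightarrow> Comp f (Idt a) \<approx> f"
  using eqv.id_right by blast
lemma tassoc: "valid Gs f \<Longrightarrow> valid Gs g \<Longrightarrow> valid Gs h \<Longrightarrow> Tens (Tens f g) h \<approx> Tens f (Tens g h)"
  by (rule eqv.tens_assoc)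
lemma tassoc': "valid Gs f \<Longrightarrow> valid Gs g \<Longrightarrow> valid Gs h \<Longrightarrow> Tens f (Tens g h) \<approx> Tens (Tens f g) h"
  by (rule sy, rule eqv.tens_assoc)
lemma tid: "Tens (Idt a) (Idt b) \<approx> Idt (a @ b)" by (rule eqv.tens_id)
lemma tid': "Idt (a @ b) \<approx> Tens (Idt a) (Idt b)" by (rule sy, rule eqv.tens_id)
lemma ul: "valid Gs f \<Longrightarrow> Tens (Idt []) f \<approx> f" by (rule eqv.unit_left)
lemma ur: "valid Gs f \<Longrightarrow> Tens f (Idt []) \<approx> f" by (rule eqv.unit_right)
lemma ich: "valid Gs f \<Longrightarrow> valid Gs f' \<Longrightarrow> valid Gs g \<Longrightarrow> valid Gs g' \<Longrightarrow>
     dcod f = ddom f' \<Longrightarrow> dcod g = ddom g' \<Longrightarrow>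
     Comp (Tens f g) (Tens f' g') \<approx> Tens (Comp f f') (Comp g g')" by (rule eqv.interchange)
lemma ich': "valid Gs f \<Longrightarrow> valid Gs f' \<Longrightarrow> valid Gs g \<Longrightarrow> valid Gs g' \<Longrightarrow>
     dcod f = ddom f' \<Longrightarrow> dcod g = ddom g' \<Longrightarrow>
     Tens (Comp f f') (Comp g g') \<approx> Comp (Tens f g) (Tens f' g')" by (rule sy, rule eqv.interchange)

lemma ccong: "f \<approx> f' \<Longrightarrow> g \<approx> g' \<Longrightarrow> dcod f = ddom g \<Longrightarrow> Comp f g \<approx> Comp f' g'"
  by (rule eqv.comp_cong)
lemma tcong: "f \<approx> f' \<Longrightarrow> g \<approx> g' \<Longrightarrow> Tens f g \<approx> Tens f' g'"
  by (rule eqv.tens_cong)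

lemma whc: "f \<approx> g \<Longrightarrow> wh a f b \<approx> wh a g b"
  unfolding wh_def by (intro tcong rfl) auto

lemma wh0: "valid Gs f \<Longrightarrow> wh [] f [] \<approx> f"
  unfolding wh_def by (rule eqv.trans[OF ur ul]) auto

lemma whI: "wh a (Idt c) b \<approx> Idt (a @ c @ b)"
proof -
  have "wh a (Idt c) b \<approx> Tens (Idt (a @ c)) (Idt b)" unfolding wh_def by (rule tl[OF tid]) simp
  also have "\<dots> \<approx> Idt (a @ c @ b)" using tid[of "a @ c" b] by simp
  finally show ?thesis .
qed

lemma whwh: "valid Gs f \<Longrightarrow> wh a (wh c f d) b \<approx> wh (a @ c) f (d @ b)"
proof -
  assume v: "valid Gs f"
  have "wh a (wh c f d) b = Tens (Tens (Idt a) (Tens (Tens (Idt c) f) (Idt d))) (Idt b)" by (simp add: wh_def)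
  also have "\<dots> \<approx> Tens (Tens (Tens (Idt a) (Tens (Idt c) f)) (Idt d)) (Idt b)"
    by (rule tl, rule tassoc') (use v in auto)
  also have "\<dots> \<approx> Tens (Tens (Tens (Tens (Idt a) (Idt c)) f) (Idt d)) (Idt b)"
    by (intro tl tassoc') (use v in auto)
  also have "\<dots> \<approx> Tens (Tens (Tens (Idt (a @ c)) f) (Idt d)) (Idt b)"
    by (intro tl tid) (use v in auto)
  also have "\<dots> \<approx> Tens (Tens (Idt (a @ c)) f) (Tens (Idt d) (Idt b))"
    by (intro tassoc) (use v in auto)
  also have "\<dots> \<approx> Tens (Tens (Idt (a @ c)) f) (Idt (d @ b))"
    by (intro tr tid) (use v in auto)
  finally show ?thesis by (simp add: wh_def)
qed

lemma whwh': "valid Gs f \<Longrightarrow> a' = a @ c \<Longrightarrow> b' = d @ b \<Longrightarrow> wh a (wh c f d) b \<approx> wh a' f b'"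
  using whwh by simp
lemma whwh'': "valid Gs f \<Longrightarrow> a' = a @ c \<Longrightarrow> b' = d @ b \<Longrightarrow> wh a' f b' \<approx> wh a (wh c f d) b"
  using whwh sy by simp

lemma whC: "valid Gs f \<Longrightarrow> valid Gs g \<Longrightarrow> dcod f = ddom g \<Longrightarrow>
   wh a (Comp f g) b \<approx> Comp (wh a f b) (wh a g b)"
proof -
  assume v: "valid Gs f" "valid Gs g" "dcod f = ddom g"
  have "wh a (Comp f g) b \<approx> Tens (Tens (Comp (Idt a) (Idt a)) (Comp f g)) (Comp (Idt b) (Idt b))"
    unfolding wh_def by (intro tcong sy[OF idl] rfl) (use v in auto)
  also have "\<dots> \<approx> Tens (Comp (Tens (Idt a) f) (Tens (Idt a) g)) (Comp (Idt b) (Idt b))"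
    by (intro tl ich') (use v in auto)
  also have "\<dots> \<approx> Comp (wh a f b) (wh a g b)"
    unfolding wh_def by (intro ich') (use v in auto)
  finally show ?thesis .
qed

lemma TensL: "valid Gs f \<Longrightarrow> Tens (Idt a) f \<approx> wh a f []"
  unfolding wh_def by (rule sy, rule ur) auto
lemma TensR: "valid Gs f \<Longrightarrow> Tens f (Idt b) \<approx> wh [] f b"
  unfolding wh_def by (rule sy, rule tl[OF ul]) auto

lemma wh_split: "valid Gs f \<Longrightarrow> valid Gs g \<Longrightarrow>
   Tens f g \<approx> Comp (wh [] f (ddom g)) (wh (dcod f) g [])"
proof -
  assume v: "valid Gs f" "valid Gs g"
  have "Tens f g \<approx> Tens (Comp f (Idt (dcod f))) (Comp (Idt (ddom g)) g)"
    by (intro tcong sy[OF idl] sy[OF idr]) (use v in auto)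
  also have "\<dots> \<approx> Comp (Tens f (Idt (ddom g))) (Tens (Idt (dcod f)) g)"
    by (intro ich') (use v in auto)
  also have "\<dots> \<approx> Comp (wh [] f (ddom g)) (wh (dcod f) g [])"
    by (intro ccong TensL TensR) (use v in auto)
  finally show ?thesis .
qed

lemma wh_split': "valid Gs f \<Longrightarrow> valid Gs g \<Longrightarrow>
   Tens f g \<approx> Comp (wh (ddom f) g []) (wh [] f (dcod g))"
proof -
  assume v: "valid Gs f" "valid Gs g"
  have "Tens f g \<approx> Tens (Comp (Idt (ddom f)) f) (Comp g (Idt (dcod g)))"
    by (intro tcong sy[OF idl] sy[OF idr]) (use v in auto)
  also have "\<dots> \<approx> Comp (Tens (Idt (ddom f)) g) (Tens f (Idt (dcod g)))"
    by (intro ich') (use v in auto)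
  also have "\<dots> \<approx> Comp (wh (ddom f) g []) (wh [] f (dcod g))"
    by (intro ccong TensL TensR) (use v in auto)
  finally show ?thesis .
qed

lemma swap: "valid Gs f \<Longrightarrow> valid Gs g \<Longrightarrow>
  Comp (wh a f (ddom g @ b)) (wh (a @ dcod f) g b) \<approx> Comp (wh (a @ ddom f) g b) (wh a f (dcod g @ b))"
proof -
  assume v: "valid Gs f" "valid Gs g"
  have "Comp (wh a f (ddom g @ b)) (wh (a @ dcod f) g b) \<approx> Comp (wh a (wh [] f (ddom g)) b) (wh a (wh (dcod f) g []) b)"
    by (intro ccong whwh'') (use v in auto)
  also have "\<dots> \<approx> wh a (Comp (wh [] f (ddom g)) (wh (dcod f) g [])) b"
    by (intro sy[OF whC]) (use v in auto)
  also have "\<dots> \<approx> wh a (Tens f g) b" by (intro whc sy[OF wh_split]) (use v in auto)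
  also have "\<dots> \<approx> wh a (Comp (wh (ddom f) g []) (wh [] f (dcod g))) b" by (intro whc wh_split') (use v in auto)
  also have "\<dots> \<approx> Comp (wh a (wh (ddom f) g []) b) (wh a (wh [] f (dcod g)) b)"
    by (intro whC) (use v in auto)
  also have "\<dots> \<approx> Comp (wh (a @ ddom f) g b) (wh a f (dcod g @ b))"
    by (intro ccong whwh') (use v in auto)
  finally show ?thesis .
qed


lemma swap0: "valid Gs f \<Longrightarrow> valid Gs g \<Longrightarrow>
  Comp (wh [] f (ddom g)) (wh (dcod f) g []) \<approx> Comp (wh (ddom f) g []) (wh [] f (dcod g))"
  using swap[of f g "[]" "[]"] by simp

end

fun stw :: "('z \<Rightarrow> orient \<Rightarrow> 'z) \<Rightarrow> 'z \<Rightarrow> orient list \<Rightarrow> 'z" where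
  "stw st z [] = z"
| "stw st z (x # b) = stw st (st z x) b"

lemma stw_app[simp]: "stw st z (a @ b) = stw st (stw st z a) b"
  by (induction a arbitrary: z) auto

fun Rf :: "('z \<Rightarrow> orient list) \<Rightarrow> ('z \<Rightarrow> orient \<Rightarrow> 'z) \<Rightarrow> ('z \<Rightarrow> orient \<Rightarrow> dgm) \<Rightarrow> 'z \<Rightarrow> orient list \<Rightarrow> dgm" where
  "Rf word st r z [] = Idt (word z)"
| "Rf word st r z (x # b) = Comp (wh [] (r z x) b) (Rf word st r (st z x) b)"

fun Df :: "('z \<Rightarrow> orient list) \<Rightarrow> ('z \<Rightarrow> orient \<Rightarrow> 'z) \<Rightarrow> ('z \<Rightarrow> orient \<Rightarrow> dgm) \<Rightarrow> 'z \<Rightarrow> orient list \<Rightarrow> dgm" where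
  "Df word st r' z [] = Idt (word z)"
| "Df word st r' z (x # b) = Comp (Df word st r' (st z x) b) (wh [] (r' z x) b)"

locale nf0 = pres +
  fixes word :: "'z \<Rightarrow> orient list" and st :: "'z \<Rightarrow> orient \<Rightarrow> 'z" and ok :: "'z \<Rightarrow> bool"
    and z0 :: 'z and r r' :: "'z \<Rightarrow> orient \<Rightarrow> dgm"
  assumes ok0: "ok z0" and word0: "word z0 = []" and ok_st: "ok z \<Longrightarrow> ok (st z x)"
  and word_inj: "ok z \<Longrightarrow> ok z' \<Longrightarrow> word z = word z' \<Longrightarrow> z = z'"
  and r_ty: "ok z \<Longrightarrow> valid Gs (r z x) \<and> ddom (r z x) = word z @ [x] \<and> dcod (r z x) = word (st z x)"
  and r'_ty: "ok z \<Longrightarrow> valid Gs (r' z x) \<and> ddom (r' z x) = word (st z x) \<and> dcod (r' z x) = word z @ [x]"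
  and r_inv: "ok z \<Longrightarrow> Comp (r z x) (r' z x) \<approx> Idt (word z @ [x])"
begin
abbreviation "R \<equiv> Rf word st r"
abbreviation "D \<equiv> Df word st r'"


lemma ok_stw: "ok z \<Longrightarrow> ok (stw st z b)"
  by (induction b arbitrary: z) (auto simp: ok_st)

lemma R_ty: "ok z \<Longrightarrow> valid Gs (R z b) \<and> ddom (R z b) = word z @ b \<and> dcod (R z b) = word (stw st z b)"
  by (induction b arbitrary: z) (auto simp: ok_st r_ty)

lemma D_ty: "ok z \<Longrightarrow> valid Gs (D z b) \<and> dcod (D z b) = word z @ b \<and> ddom (D z b) = word (stw st z b)"
  by (induction b arbitrary: z) (auto simp: ok_st r'_ty)

lemma RD: "ok z \<Longrightarrow> Comp (R z b) (D z b) \<approx> Idt (word z @ b)"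
proof (induction b arbitrary: z)
  case Nil
  then show ?case by (simp add: idl)
next
  case (Cons x b)
  let ?z = "st z x"
  have o: "ok ?z" using Cons ok_st by blast
  note t = R_ty[OF o, of b] D_ty[OF o, of b] r_ty[OF Cons.prems, of x] r'_ty[OF Cons.prems, of x]
  have "Comp (R z (x # b)) (D z (x # b)) = Comp (Comp (wh [] (r z x) b) (R ?z b)) (Comp (D ?z b) (wh [] (r' z x) b))"
    by simp
  also have "\<dots> \<approx> Comp (wh [] (r z x) b) (Comp (R ?z b) (Comp (D ?z b) (wh [] (r' z x) b)))"
    by (rule assoc) (use t in auto)
  also have "\<dots> \<approx> Comp (wh [] (r z x) b) (Comp (Comp (R ?z b) (D ?z b)) (wh [] (r' z x) b))"
    by (intro cr assoc') (use t in auto)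
  also have "\<dots> \<approx> Comp (wh [] (r z x) b) (Comp (Idt (word ?z @ b)) (wh [] (r' z x) b))"
    by (intro cr cl Cons.IH o) (use t in auto)
  also have "\<dots> \<approx> Comp (wh [] (r z x) b) (wh [] (r' z x) b)"
    by (intro cr idl) (use t in auto)
  also have "\<dots> \<approx> wh [] (Comp (r z x) (r' z x)) b"
    by (intro sy[OF whC]) (use t in auto)
  also have "\<dots> \<approx> wh [] (Idt (word z @ [x])) b"
    by (intro whc r_inv Cons.prems)
  also have "\<dots> \<approx> Idt (word z @ x # b)" using whI[of "[]" "word z @ [x]" b] by simp
  finally show ?case .
qed

lemma R_app: "ok z \<Longrightarrow> R z (w @ b) \<approx> Comp (wh [] (R z w) b) (R (stw st z w) b)"
proof (induction w arbitrary: z)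
  case Nil
  note t = R_ty[OF Nil.prems, of b]
  have "R z b \<approx> Comp (Idt (word z @ b)) (R z b)" by (rule sy, rule idl) (use t in auto)
  also have "\<dots> \<approx> Comp (wh [] (R z []) b) (R z b)"
    by (intro cl) (use t whI[of "[]" "word z" b] sy in auto)
  finally show ?case by simp
next
  case (Cons x w)
  let ?z = "st z x"
  have o: "ok ?z" using Cons ok_st by blast
  note t = R_ty[OF o, of b] R_ty[OF o, of w] R_ty[OF ok_stw[OF o, of w], of b] r_ty[OF Cons.prems, of x] R_ty[OF o, of "w @ b"]
  have "R z ((x # w) @ b) = Comp (wh [] (r z x) (w @ b)) (R ?z (w @ b))" by simp
  also have "\<dots> \<approx> Comp (wh [] (r z x) (w @ b)) (Comp (wh [] (R ?z w) b) (R (stw st ?z w) b))"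
    by (intro cr Cons.IH o) (use t in auto)
  also have "\<dots> \<approx> Comp (Comp (wh [] (r z x) (w @ b)) (wh [] (R ?z w) b)) (R (stw st ?z w) b)"
    by (intro assoc') (use t in auto)
  also have "\<dots> \<approx> Comp (Comp (wh [] (wh [] (r z x) w) b) (wh [] (R ?z w) b)) (R (stw st ?z w) b)"
    by (intro cl ccong whwh'' rfl) (use t in auto)
  also have "\<dots> \<approx> Comp (wh [] (Comp (wh [] (r z x) w) (R ?z w)) b) (R (stw st ?z w) b)"
    by (intro cl sy[OF whC]) (use t in auto)
  finally show ?case by simp
qed

lemma R1: "ok z \<Longrightarrow> R z [x] \<approx> r z x"
proof -
  assume o: "ok z"
  note t = r_ty[OF o, of x]
  have "R z [x] = Comp (wh [] (r z x) []) (Idt (word (st z x)))" by simp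
  also have "\<dots> \<approx> wh [] (r z x) []" by (rule idr) (use t in auto)
  also have "\<dots> \<approx> r z x" by (rule wh0) (use t in auto)
  finally show ?thesis .
qed

lemma R2: "ok z \<Longrightarrow> R z [x, y] \<approx> Comp (wh [] (r z x) [y]) (r (st z x) y)"
proof -
  assume o: "ok z"
  note t = r_ty[OF o, of x] r_ty[OF ok_st[OF o], where x=y]
  have "R z [x, y] = Comp (wh [] (r z x) [y]) (R (st z x) [y])" by simp
  also have "\<dots> \<approx> Comp (wh [] (r z x) [y]) (r (st z x) y)"
    by (intro cr R1 ok_st o) (use t R_ty[OF ok_st[OF o], where b="[y]"] in auto)
  finally show ?thesis .
qed

lemma pair: "ok z \<Longrightarrow> g \<in> Gs \<Longrightarrow> g' \<in> Gs \<Longrightarrow> gdom g' = gcod g \<Longrightarrow> gcod g' = gdom g \<Longrightarrow>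
   Comp (Gen g') (Gen g) \<approx> Idt (gcod g) \<Longrightarrow>
   Comp (wh (word z) (Gen g) []) (R z (gcod g)) \<approx> R z (gdom g) \<Longrightarrow>
   Comp (wh (word z) (Gen g') []) (R z (gcod g')) \<approx> R z (gdom g')"
proof -
  assume o: "ok z" and g: "g \<in> Gs" "g' \<in> Gs" "gdom g' = gcod g" "gcod g' = gdom g"
    and inv: "Comp (Gen g') (Gen g) \<approx> Idt (gcod g)"
    and h: "Comp (wh (word z) (Gen g) []) (R z (gcod g)) \<approx> R z (gdom g)"
  note t = R_ty[OF o, of "gdom g"] R_ty[OF o, of "gcod g"]
  let ?W = "word z"
  have "Comp (wh ?W (Gen g') []) (R z (gdom g)) \<approx> Comp (wh ?W (Gen g') []) (Comp (wh ?W (Gen g) []) (R z (gcod g)))"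
    by (intro cr sy[OF h]) (use t g in auto)
  also have "\<dots> \<approx> Comp (Comp (wh ?W (Gen g') []) (wh ?W (Gen g) [])) (R z (gcod g))"
    by (intro assoc') (use t g in auto)
  also have "\<dots> \<approx> Comp (wh ?W (Comp (Gen g') (Gen g)) []) (R z (gcod g))"
    by (intro cl sy[OF whC]) (use t g in auto)
  also have "\<dots> \<approx> Comp (wh ?W (Idt (gcod g)) []) (R z (gcod g))"
    by (intro cl whc inv) (use t g in auto)
  also have "\<dots> \<approx> Comp (Idt (?W @ gcod g)) (R z (gcod g))"
    by (intro cl) (use t g whI[of ?W "gcod g" "[]"] in auto)
  also have "\<dots> \<approx> R z (gcod g)" by (intro idl) (use t in auto)
  finally show ?thesis using g by simp
qed

end

locale nf = nf0 +
  assumes gen: "ok z \<Longrightarrow> g \<in> Gs \<Longrightarrow>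
      Comp (wh (word z) (Gen g) []) (Rf word st r z (gcod g)) \<approx> Rf word st r z (gdom g)"
begin

lemma stw_eq: "valid Gs t \<Longrightarrow> ok z \<Longrightarrow> stw st z (ddom t) = stw st z (dcod t)"
proof (induction t arbitrary: z)
  case (Gen g)
  have "dcod (Comp (wh (word z) (Gen g) []) (R z (gcod g))) = dcod (R z (gdom g))"
    using tyc[OF gen[OF Gen.prems(2)]] Gen.prems(1) by simp
  then have "word (stw st z (gcod g)) = word (stw st z (gdom g))"
    using R_ty[OF Gen.prems(2)] by simp
  then show ?case using word_inj ok_stw Gen.prems by auto
next
  case (Tens f g)
  then show ?case using ok_stw by simp
qed auto

end

context nf begin

lemma main: "valid Gs t \<Longrightarrow> Comp (wh w t []) (R z0 (w @ dcod t)) \<approx> R z0 (w @ ddom t)"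
proof (induction t arbitrary: w)
  case (Idt a)
  note t = R_ty[OF ok0, of "w @ a"]
  have "Comp (wh w (Idt a) []) (R z0 (w @ a)) \<approx> Comp (Idt (w @ a)) (R z0 (w @ a))"
    by (intro cl) (use whI[of w a "[]"] t word0 in auto)
  also have "\<dots> \<approx> R z0 (w @ a)" by (rule idl) (use t word0 in auto)
  finally show ?case by simp
next
  case (Gen g)
  have g: "g \<in> Gs" using Gen by simp
  let ?N = "stw st z0 w"
  let ?a = "gdom g" and ?b = "gcod g"
  have o: "ok ?N" using ok_stw ok0 by blast
  note t = R_ty[OF ok0, of w] R_ty[OF o, of ?a] R_ty[OF o, of ?b]
  have "Comp (wh w (Gen g) []) (R z0 (w @ ?b)) \<approx> Comp (wh w (Gen g) []) (Comp (wh [] (R z0 w) ?b) (R ?N ?b))"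
    by (intro cr R_app ok0) (use t g R_ty[OF ok0, of "w @ ?b"] word0 in auto)
  also have "\<dots> \<approx> Comp (Comp (wh w (Gen g) []) (wh [] (R z0 w) ?b)) (R ?N ?b)"
    by (intro assoc') (use t g word0 in auto)
  also have "\<dots> \<approx> Comp (Comp (wh [] (R z0 w) ?a) (wh (word ?N) (Gen g) [])) (R ?N ?b)"
  proof -
    have "Comp (wh [] (R z0 w) ?a) (wh (word ?N) (Gen g) []) \<approx> Comp (wh w (Gen g) []) (wh [] (R z0 w) ?b)"
      using swap0[of "R z0 w" "Gen g"] t g word0 by simp
    note sw = sy[OF this]
    show ?thesis by (intro cl sw) (use t g word0 in auto)
  qed
  also have "\<dots> \<approx> Comp (wh [] (R z0 w) ?a) (Comp (wh (word ?N) (Gen g) []) (R ?N ?b))"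
    by (intro assoc) (use t g word0 in auto)
  also have "\<dots> \<approx> Comp (wh [] (R z0 w) ?a) (R ?N ?a)"
    by (intro cr gen o g) (use t g word0 in auto)
  also have "\<dots> \<approx> R z0 (w @ ?a)"
    by (intro sy[OF R_app] ok0)
  finally show ?case by simp
next
  case (Comp f g)
  have v: "valid Gs f" "valid Gs g" "dcod f = ddom g" using Comp.prems by auto
  note t = R_ty[OF ok0, of "w @ dcod g"] R_ty[OF ok0, of "w @ ddom g"]
  have "Comp (wh w (Comp f g) []) (R z0 (w @ dcod g)) \<approx> Comp (Comp (wh w f []) (wh w g [])) (R z0 (w @ dcod g))"
    by (intro cl whC) (use v t word0 in auto)
  also have "\<dots> \<approx> Comp (wh w f []) (Comp (wh w g []) (R z0 (w @ dcod g)))"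
    by (intro assoc) (use v t word0 in auto)
  also have "\<dots> \<approx> Comp (wh w f []) (R z0 (w @ ddom g))"
    by (intro cr Comp.IH v) (use v t word0 in auto)
  also have "\<dots> \<approx> R z0 (w @ ddom f)"
    using Comp.IH(1)[OF v(1), of w] v by simp
  finally show ?case by simp
next
  case (Tens f g)
  have v: "valid Gs f" "valid Gs g" using Tens.prems by auto
  let ?u = "ddom f" and ?v = "dcod f" and ?u' = "ddom g" and ?v' = "dcod g"
  have sv: "stw st z0 (w @ ?u) = stw st z0 (w @ ?v)"
    using stw_eq[OF v(1) ok_stw[OF ok0, of w]] by simp
  let ?N = "stw st z0 (w @ ?v)"
  have o: "ok ?N" using ok_stw ok0 by blast
  note t = R_ty[OF ok0, of "w @ ?v @ ?v'"] R_ty[OF ok0, of "w @ ?v @ ?u'"] R_ty[OF ok0, of "w @ ?v"]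
     R_ty[OF ok0, of "w @ ?u"] R_ty[OF o, of ?u']
  have "wh w (Tens f g) [] \<approx> wh w (Comp (wh [] f ?u') (wh ?v g [])) []"
    by (intro whc wh_split v)
  also have "\<dots> \<approx> Comp (wh w (wh [] f ?u') []) (wh w (wh ?v g []) [])"
    by (intro whC) (use v in auto)
  also have "\<dots> \<approx> Comp (wh w f ?u') (wh (w @ ?v) g [])"
    by (intro ccong whwh') (use v in auto)
  finally have e1: "wh w (Tens f g) [] \<approx> Comp (wh w f ?u') (wh (w @ ?v) g [])" .
  have "Comp (wh w (Tens f g) []) (R z0 (w @ ?v @ ?v')) \<approx> Comp (Comp (wh w f ?u') (wh (w @ ?v) g [])) (R z0 (w @ ?v @ ?v'))"
    by (intro cl e1) (use v t word0 in auto)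
  also have "\<dots> \<approx> Comp (wh w f ?u') (Comp (wh (w @ ?v) g []) (R z0 (w @ ?v @ ?v')))"
    by (intro assoc) (use v t word0 in auto)
  also have "\<dots> \<approx> Comp (wh w f ?u') (R z0 (w @ ?v @ ?u'))"
    by (intro cr) (use Tens.IH(2)[OF v(2), of "w @ ?v"] v t word0 in auto)
  also have "\<dots> \<approx> Comp (wh w f ?u') (Comp (wh [] (R z0 (w @ ?v)) ?u') (R ?N ?u'))"
  proof -
    have ra: "R z0 (w @ ?v @ ?u') \<approx> Comp (wh [] (R z0 (w @ ?v)) ?u') (R ?N ?u')"
      using R_app[OF ok0, of "w @ ?v" ?u'] by simp
    show ?thesis by (intro cr ra) (use v t word0 in auto)
  qed
  also have "\<dots> \<approx> Comp (Comp (wh w f ?u') (wh [] (R z0 (w @ ?v)) ?u')) (R ?N ?u')"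
    by (intro assoc') (use v t word0 in auto)
  also have "\<dots> \<approx> Comp (Comp (wh [] (wh w f []) ?u') (wh [] (R z0 (w @ ?v)) ?u')) (R ?N ?u')"
    by (intro cl ccong whwh'' rfl) (use v t word0 in auto)
  also have "\<dots> \<approx> Comp (wh [] (Comp (wh w f []) (R z0 (w @ ?v))) ?u') (R ?N ?u')"
    by (intro cl sy[OF whC]) (use v t word0 in auto)
  also have "\<dots> \<approx> Comp (wh [] (R z0 (w @ ?u)) ?u') (R ?N ?u')"
    by (intro cl whc Tens.IH v) (use v t word0 in auto)
  also have "\<dots> \<approx> R z0 ((w @ ?u) @ ?u')"
    using sy[OF R_app[OF ok0, of "w @ ?u" ?u']] sv by simp
  finally show ?case by simp
qed

lemma faithful: "valid Gs s \<Longrightarrow> valid Gs t \<Longrightarrow> ddom s = ddom t \<Longrightarrow> dcod s = dcod t \<Longrightarrow> s \<approx> t"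
proof -
  assume v: "valid Gs s" "valid Gs t" "ddom s = ddom t" "dcod s = dcod t"
  have key: "valid Gs x \<Longrightarrow> x \<approx> Comp (R z0 (ddom x)) (D z0 (dcod x))" for x
  proof -
    assume vx: "valid Gs x"
    note t = R_ty[OF ok0, of "dcod x"] D_ty[OF ok0, of "dcod x"] R_ty[OF ok0, of "ddom x"]
    have "x \<approx> Comp x (Idt (dcod x))" by (rule sy, rule idr) (use vx in auto)
    also have "\<dots> \<approx> Comp x (Comp (R z0 (dcod x)) (D z0 (dcod x)))"
    proof -
      have rd: "Idt (dcod x) \<approx> Comp (R z0 (dcod x)) (D z0 (dcod x))"
        using sy[OF RD[OF ok0, of "dcod x"]] word0 by simp
      show ?thesis by (intro cr rd) (use vx t word0 in auto)
    qed
    also have "\<dots> \<approx> Comp (Comp x (R z0 (dcod x))) (D z0 (dcod x))"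
      by (intro assoc') (use vx t word0 in auto)
    also have "\<dots> \<approx> Comp (Comp (wh [] x []) (R z0 (dcod x))) (D z0 (dcod x))"
      by (intro cl ccong sy[OF wh0] rfl) (use vx t word0 in auto)
    also have "\<dots> \<approx> Comp (R z0 (ddom x)) (D z0 (dcod x))"
      by (intro cl) (use main[OF vx, of "[]"] vx t word0 in auto)
    finally show ?thesis .
  qed
  have "Comp (R z0 (ddom s)) (D z0 (dcod s)) = Comp (R z0 (ddom t)) (D z0 (dcod t))" using v by simp
  then have "s \<approx> Comp (R z0 (ddom t)) (D z0 (dcod t))" using key[OF v(1)] by simp
  then show ?thesis using eqv.trans sy[OF key[OF v(2)]] by blast
qed

lemma full: "stw st z0 u = stw st z0 v \<Longrightarrow> \<exists>t. valid Gs t \<and> ddom t = u \<and> dcod t = v"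
  by (rule exI[of _ "Comp (R z0 u) (D z0 v)"]) (use R_ty[OF ok0, of u] D_ty[OF ok0, of v] word0 in auto)

end


declare replicate_append_same[simp] replicate_app_Cons_same[simp]

locale bp = pres +
  assumes Bg: "B_gens \<subseteq> Gs" and Br: "B_rels \<subseteq> Rs"
begin

lemma gens[simp]: "CupL \<in> Gs" "CapL \<in> Gs" "CupR \<in> Gs" "CapR \<in> Gs"
  using Bg by (auto simp: B_gens_def)

lemma rl: "(s, t) \<in> B_rels \<Longrightarrow> s \<approx> t" using Br eqv.rel by blast

lemma zz1: "Comp (wh [] (Gen CupL) [Up]) (wh [Up] (Gen CapL) []) \<approx> Idt [Up]"
proof -
  have "Comp (wh [] (Gen CupL) [Up]) (wh [Up] (Gen CapL) []) \<approx> Comp (Tens (Gen CupL) (Idt [Up])) (Tens (Idt [Up]) (Gen CapL))"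
    by (intro ccong sy[OF TensR] sy[OF TensL]) auto
  also have "\<dots> \<approx> Idt [Up]" by (rule rl) (simp add: B_rels_def)
  finally show ?thesis .
qed

lemma zz2: "Comp (wh [Dn] (Gen CupL) []) (wh [] (Gen CapL) [Dn]) \<approx> Idt [Dn]"
proof -
  have "Comp (wh [Dn] (Gen CupL) []) (wh [] (Gen CapL) [Dn]) \<approx> Comp (Tens (Idt [Dn]) (Gen CupL)) (Tens (Gen CapL) (Idt [Dn]))"
    by (intro ccong sy[OF TensR] sy[OF TensL]) auto
  also have "\<dots> \<approx> Idt [Dn]" by (rule rl) (simp add: B_rels_def)
  finally show ?thesis .
qed

lemma zz3: "Comp (wh [] (Gen CupR) [Dn]) (wh [Dn] (Gen CapR) []) \<approx> Idt [Dn]"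
proof -
  have "Comp (wh [] (Gen CupR) [Dn]) (wh [Dn] (Gen CapR) []) \<approx> Comp (Tens (Gen CupR) (Idt [Dn])) (Tens (Idt [Dn]) (Gen CapR))"
    by (intro ccong sy[OF TensR] sy[OF TensL]) auto
  also have "\<dots> \<approx> Idt [Dn]" by (rule rl) (simp add: B_rels_def)
  finally show ?thesis .
qed

lemma zz4: "Comp (wh [Up] (Gen CupR) []) (wh [] (Gen CapR) [Up]) \<approx> Idt [Up]"
proof -
  have "Comp (wh [Up] (Gen CupR) []) (wh [] (Gen CapR) [Up]) \<approx> Comp (Tens (Idt [Up]) (Gen CupR)) (Tens (Gen CapR) (Idt [Up]))"
    by (intro ccong sy[OF TensR] sy[OF TensL]) auto
  also have "\<dots> \<approx> Idt [Up]" by (rule rl) (simp add: B_rels_def)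
  finally show ?thesis .
qed

lemma c1: "Comp (Gen CupL) (Gen CapR) \<approx> Idt []" by (rule rl) (simp add: B_rels_def)
lemma c2: "Comp (Gen CupR) (Gen CapL) \<approx> Idt []" by (rule rl) (simp add: B_rels_def)
lemma i1: "Comp (Gen CapR) (Gen CupL) \<approx> Idt [Up, Dn]" by (rule sy, rule rl) (simp add: B_rels_def)
lemma i2: "Comp (Gen CapL) (Gen CupR) \<approx> Idt [Dn, Up]" by (rule sy, rule rl) (simp add: B_rels_def)

lemma whinv: "Comp f g \<approx> Idt c \<Longrightarrow> Comp (wh a f b) (wh a g b) \<approx> Idt (a @ c @ b)"
proof -
  assume h: "Comp f g \<approx> Idt c"
  have v: "valid Gs f" "valid Gs g" "dcod f = ddom g" using tyv1[OF h] by auto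
  have "Comp (wh a f b) (wh a g b) \<approx> wh a (Comp f g) b" by (rule sy, rule whC) (use v in auto)
  also have "\<dots> \<approx> wh a (Idt c) b" by (rule whc[OF h])
  also have "\<dots> \<approx> Idt (a @ c @ b)" by (rule whI)
  finally show ?thesis .
qed

lemma L0: "wh [Up] (Gen CapL) [] \<approx> wh [] (Gen CapR) [Up]"
proof -
  have "wh [Up] (Gen CapL) [] \<approx> Comp (Idt [Up, Dn, Up]) (wh [Up] (Gen CapL) [])" by (rule sy, rule idl) auto
  also have "\<dots> \<approx> Comp (Comp (wh [] (Gen CapR) [Up]) (wh [] (Gen CupL) [Up])) (wh [Up] (Gen CapL) [])"
    by (intro cl) (use sy[OF whinv[OF i1, of "[]" "[Up]"]] in auto)
  also have "\<dots> \<approx> Comp (wh [] (Gen CapR) [Up]) (Comp (wh [] (Gen CupL) [Up]) (wh [Up] (Gen CapL) []))"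
    by (intro assoc) auto
  also have "\<dots> \<approx> Comp (wh [] (Gen CapR) [Up]) (Idt [Up])"
    by (intro cr zz1) auto
  also have "\<dots> \<approx> wh [] (Gen CapR) [Up]" by (intro idr) auto
  finally show ?thesis .
qed

end

definition wordZ :: "int \<Rightarrow> orient list" where
  "wordZ z = (if 0 \<le> z then replicate (nat z) Up else replicate (nat (-z)) Dn)"

fun stZ :: "int \<Rightarrow> orient \<Rightarrow> int" where
  "stZ z Up = z + 1" | "stZ z Dn = z - 1"

fun rZ :: "int \<Rightarrow> orient \<Rightarrow> dgm" where
  "rZ z Up = (if 0 \<le> z then Idt (wordZ z @ [Up]) else wh (replicate (nat (-z-1)) Dn) (Gen CapL) [])"
| "rZ z Dn = (if 0 < z then wh (replicate (nat (z-1)) Up) (Gen CapR) [] else Idt (wordZ z @ [Dn]))"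

fun r'Z :: "int \<Rightarrow> orient \<Rightarrow> dgm" where
  "r'Z z Up = (if 0 \<le> z then Idt (wordZ z @ [Up]) else wh (replicate (nat (-z-1)) Dn) (Gen CupR) [])"
| "r'Z z Dn = (if 0 < z then wh (replicate (nat (z-1)) Up) (Gen CupL) [] else Idt (wordZ z @ [Dn]))"

lemma wordZ_neg: "z < 0 \<Longrightarrow> wordZ z = Dn # replicate (nat (-z-1)) Dn"
proof -
  assume "z < 0"
  moreover have "nat (-z) = Suc (nat (-z-1))" using \<open>z < 0\<close> by arith
  ultimately show ?thesis unfolding wordZ_def by simp
qed
lemma wordZ_neg1: "z < 0 \<Longrightarrow> wordZ (z + 1) = replicate (nat (-z-1)) Dn"
proof -
  assume a: "z < 0"
  show ?thesis
  proof (cases "z = -1")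
    case True then show ?thesis by (simp add: wordZ_def)
  next
    case False
    then have "\<not> 0 \<le> z + 1" "nat (-(z+1)) = nat (-z-1)" using a by arith+
    then show ?thesis unfolding wordZ_def by simp
  qed
qed
lemma wordZ_pos: "0 < z \<Longrightarrow> wordZ z = Up # replicate (nat (z-1)) Up"
proof -
  assume "0 < z"
  moreover have "nat z = Suc (nat (z-1))" using \<open>0 < z\<close> by arith
  ultimately show ?thesis unfolding wordZ_def by simp
qed
lemma wordZ_pos1: "0 < z \<Longrightarrow> wordZ (z - 1) = replicate (nat (z-1)) Up"
  unfolding wordZ_def by simp
lemma wordZ_nn: "0 \<le> z \<Longrightarrow> wordZ (z + 1) = Up # wordZ z"
proof -
  assume "0 \<le> z"
  moreover have "nat (z+1) = Suc (nat z)" using \<open>0 \<le> z\<close> by arith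
  ultimately show ?thesis unfolding wordZ_def by simp
qed
lemma wordZ_np: "z \<le> 0 \<Longrightarrow> wordZ (z - 1) = Dn # wordZ z"
proof -
  assume a: "z \<le> 0"
  have "nat (-(z-1)) = Suc (nat (-z))" using a by arith
  moreover have "\<not> 0 \<le> z - 1" using a by arith
  ultimately show ?thesis unfolding wordZ_def using a by (cases "z = 0") auto
qed
lemma wordZ_nn0: "0 \<le> z \<Longrightarrow> wordZ z = replicate (nat z) Up"
  unfolding wordZ_def by simp
lemma wordZ_np0: "z \<le> 0 \<Longrightarrow> wordZ z = replicate (nat (-z)) Dn"
  unfolding wordZ_def by auto
lemma wordZ_inj: "wordZ z = wordZ z' \<Longrightarrow> z = z'"
proof -
  assume h: "wordZ z = wordZ z'"
  have l: "length (wordZ z) = nat \<bar>z\<bar>" for z unfolding wordZ_def by auto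
  have m: "Dn \<in> set (wordZ z) \<longleftrightarrow> z < 0" for z
    using wordZ_neg[of z] unfolding wordZ_def by (auto split: if_splits)
  have s: "z < 0 \<longleftrightarrow> z' < 0" using m[of z] m[of z'] h by simp
  have "nat \<bar>z\<bar> = nat \<bar>z'\<bar>" using l[of z] l[of z'] h by simp
  then show ?thesis using s by arith
qed

lemma rZ_ty: "B_gens \<subseteq> Gs \<Longrightarrow> valid Gs (rZ z x) \<and> ddom (rZ z x) = wordZ z @ [x] \<and> dcod (rZ z x) = wordZ (stZ z x)"
  by (cases x) (auto simp: B_gens_def wordZ_neg wordZ_neg1 wordZ_pos wordZ_pos1 wordZ_nn wordZ_np wordZ_nn0 wordZ_np0)
lemma r'Z_ty: "B_gens \<subseteq> Gs \<Longrightarrow> valid Gs (r'Z z x) \<and> ddom (r'Z z x) = wordZ (stZ z x) \<and> dcod (r'Z z x) = wordZ z @ [x]"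
  by (cases x) (auto simp: B_gens_def wordZ_neg wordZ_neg1 wordZ_pos wordZ_pos1 wordZ_nn wordZ_np wordZ_nn0 wordZ_np0)

sublocale bp \<subseteq> Z: nf0 Gs Rs wordZ stZ "\<lambda>_. True" 0 rZ r'Z
proof
  fix z :: int and x
  show "valid Gs (rZ z x) \<and> ddom (rZ z x) = wordZ z @ [x] \<and> dcod (rZ z x) = wordZ (stZ z x)"
    using rZ_ty[OF Bg] .
  show "valid Gs (r'Z z x) \<and> ddom (r'Z z x) = wordZ (stZ z x) \<and> dcod (r'Z z x) = wordZ z @ [x]"
    using r'Z_ty[OF Bg] .
  show "Comp (rZ z x) (r'Z z x) \<approx> Idt (wordZ z @ [x])"
  proof (cases x)
    case Up
    show ?thesis
    proof (cases "0 \<le> z")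
      case True then show ?thesis using Up by (simp add: idl)
    next
      case False then show ?thesis using Up whinv[OF i2, of "replicate (nat (-z-1)) Dn" "[]"] wordZ_neg[of z] by simp
    qed
  next
    case Dn
    show ?thesis
    proof (cases "0 < z")
      case False then show ?thesis using Dn by (simp add: idl)
    next
      case True then show ?thesis using Dn whinv[OF i1, of "replicate (nat (z-1)) Up" "[]"] wordZ_pos[of z] by simp
    qed
  qed
qed (auto simp add: wordZ_nn0 intro: wordZ_inj)

context bp begin

lemma genZ_CupL: "Comp (wh (wordZ z) (Gen CupL) []) (Z.R z [Up, Dn]) \<approx> Z.R z []"
proof -
  have r2: "Z.R z [Up, Dn] \<approx> Comp (wh [] (rZ z Up) [Dn]) (rZ (z + 1) Dn)"
    using Z.R2[of z Up Dn] by simp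
  show ?thesis
  proof (cases "0 \<le> z")
    case True
    let ?P = "replicate (nat z) Up"
    have W: "wordZ z = ?P" using True by (simp add: wordZ_nn0)
    have ru: "rZ z Up = Idt (?P @ [Up])" and rd: "rZ (z + 1) Dn = wh ?P (Gen CapR) []" using True by (auto simp: wordZ_nn0)
    have "Comp (wh [] (rZ z Up) [Dn]) (rZ (z + 1) Dn) \<approx> Comp (Idt (?P @ [Up, Dn])) (wh ?P (Gen CapR) [])"
      unfolding ru rd by (intro cl) (use whI[of "[]" "?P @ [Up]" "[Dn]"] in auto)
    also have "\<dots> \<approx> wh ?P (Gen CapR) []" by (intro idl) auto
    finally have e: "Z.R z [Up, Dn] \<approx> wh ?P (Gen CapR) []" using r2 eqv.trans by blast
    have "Comp (wh (wordZ z) (Gen CupL) []) (Z.R z [Up, Dn]) \<approx> Comp (wh ?P (Gen CupL) []) (wh ?P (Gen CapR) [])"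
      unfolding W by (intro cr e) (use Z.R_ty[of z "[Up, Dn]"] W in auto)
    also have "\<dots> \<approx> Idt ?P" using whinv[OF c1, of ?P "[]"] by simp
    finally show ?thesis using W by simp
  next
    case False
    let ?p = "replicate (nat (-z-1)) Dn"
    have W: "wordZ z = Dn # ?p" using False by (simp add: wordZ_neg)
    have ru: "rZ z Up = wh ?p (Gen CapL) []" and rd: "rZ (z + 1) Dn = Idt (?p @ [Dn])"
      using False wordZ_neg1[of z] by auto
    have "Comp (wh [] (rZ z Up) [Dn]) (rZ (z + 1) Dn) \<approx> wh [] (wh ?p (Gen CapL) []) [Dn]"
      unfolding ru rd by (intro idr) auto
    also have "\<dots> \<approx> wh ?p (wh [] (Gen CapL) [Dn]) []"
      by (intro eqv.trans[OF whwh'] whwh'') auto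
    finally have e: "Z.R z [Up, Dn] \<approx> wh ?p (wh [] (Gen CapL) [Dn]) []" using r2 eqv.trans by blast
    have "Comp (wh (wordZ z) (Gen CupL) []) (Z.R z [Up, Dn]) \<approx> Comp (wh ?p (wh [Dn] (Gen CupL) []) []) (wh ?p (wh [] (Gen CapL) [Dn]) [])"
      unfolding W by (intro ccong e whwh'') (use Z.R_ty[of z "[Up, Dn]"] W in auto)
    also have "\<dots> \<approx> Idt (?p @ [Dn])" using whinv[OF zz2, of ?p "[]"] by simp
    finally show ?thesis using W by simp
  qed
qed

lemma genZ_CupR: "Comp (wh (wordZ z) (Gen CupR) []) (Z.R z [Dn, Up]) \<approx> Z.R z []"
proof -
  have r2: "Z.R z [Dn, Up] \<approx> Comp (wh [] (rZ z Dn) [Up]) (rZ (z - 1) Up)"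
    using Z.R2[of z Dn Up] by simp
  show ?thesis
  proof (cases "0 < z")
    case True
    let ?p = "replicate (nat (z-1)) Up"
    have W: "wordZ z = Up # ?p" using True by (simp add: wordZ_pos)
    have ru: "rZ z Dn = wh ?p (Gen CapR) []" and rd: "rZ (z - 1) Up = Idt (?p @ [Up])"
      using True wordZ_pos1[of z] by auto
    have "Comp (wh [] (rZ z Dn) [Up]) (rZ (z - 1) Up) \<approx> wh [] (wh ?p (Gen CapR) []) [Up]"
      unfolding ru rd by (intro idr) auto
    also have "\<dots> \<approx> wh ?p (wh [] (Gen CapR) [Up]) []"
      by (intro eqv.trans[OF whwh'] whwh'') auto
    finally have e: "Z.R z [Dn, Up] \<approx> wh ?p (wh [] (Gen CapR) [Up]) []" using r2 eqv.trans by blast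
    have "Comp (wh (wordZ z) (Gen CupR) []) (Z.R z [Dn, Up]) \<approx> Comp (wh ?p (wh [Up] (Gen CupR) []) []) (wh ?p (wh [] (Gen CapR) [Up]) [])"
      unfolding W by (intro ccong e whwh'') (use Z.R_ty[of z "[Dn, Up]"] W in auto)
    also have "\<dots> \<approx> Idt (?p @ [Up])" using whinv[OF zz4, of ?p "[]"] by simp
    finally show ?thesis using W by simp
  next
    case False
    let ?P = "replicate (nat (-z)) Dn"
    have W: "wordZ z = ?P" using False by (simp add: wordZ_np0)
    have n: "nat (- (z - 1) - 1) = nat (-z)" by arith
    have ru: "rZ z Dn = Idt (?P @ [Dn])" and rd: "rZ (z - 1) Up = wh ?P (Gen CapL) []" using False n by (auto simp: wordZ_np0)
    have "Comp (wh [] (rZ z Dn) [Up]) (rZ (z - 1) Up) \<approx> Comp (Idt (?P @ [Dn, Up])) (wh ?P (Gen CapL) [])"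
      unfolding ru rd by (intro cl) (use whI[of "[]" "?P @ [Dn]" "[Up]"] in auto)
    also have "\<dots> \<approx> wh ?P (Gen CapL) []" by (intro idl) auto
    finally have e: "Z.R z [Dn, Up] \<approx> wh ?P (Gen CapL) []" using r2 eqv.trans by blast
    have "Comp (wh (wordZ z) (Gen CupR) []) (Z.R z [Dn, Up]) \<approx> Comp (wh ?P (Gen CupR) []) (wh ?P (Gen CapL) [])"
      unfolding W by (intro cr e) (use Z.R_ty[of z "[Dn, Up]"] W in auto)
    also have "\<dots> \<approx> Idt ?P" using whinv[OF c2, of ?P "[]"] by simp
    finally show ?thesis using W by simp
  qed
qed

lemma genZ_B: "g \<in> B_gens \<Longrightarrow> Comp (wh (wordZ z) (Gen g) []) (Z.R z (gcod g)) \<approx> Z.R z (gdom g)"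
proof -
  assume g: "g \<in> B_gens"
  have a: "Comp (wh (wordZ z) (Gen CupL) []) (Z.R z (gcod CupL)) \<approx> Z.R z (gdom CupL)"
    using genZ_CupL by simp
  have b: "Comp (wh (wordZ z) (Gen CupR) []) (Z.R z (gcod CupR)) \<approx> Z.R z (gdom CupR)"
    using genZ_CupR by simp
  have c: "Comp (wh (wordZ z) (Gen CapR) []) (Z.R z (gcod CapR)) \<approx> Z.R z (gdom CapR)"
    by (rule Z.pair[OF _ _ _ _ _ _ a]) (use i1 in auto)
  have d: "Comp (wh (wordZ z) (Gen CapL) []) (Z.R z (gcod CapL)) \<approx> Z.R z (gdom CapL)"
    by (rule Z.pair[OF _ _ _ _ _ _ b]) (use i2 in auto)
  show ?thesis using g a b c d by (auto simp: B_gens_def)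
qed

end

lemma B_wf: "(s, t) \<in> B_rels \<Longrightarrow> valid B_gens s \<and> valid B_gens t \<and> ddom s = ddom t \<and> dcod s = dcod t"
  by (auto simp: B_rels_def B_gens_def)

interpretation BB: bp B_gens B_rels
  by unfold_locales (auto dest: B_wf)

interpretation ZB: nf B_gens B_rels wordZ stZ "\<lambda>_. True" 0 rZ r'Z
  by unfold_locales (rule BB.genZ_B)

lemma stwZ_shift: "stw stZ z u = z + stw stZ 0 u"
proof (induction u arbitrary: z)
  case (Cons x u)
  show ?case by (cases x) (simp_all add: Cons.IH[of "z + 1"] Cons.IH[of "z - 1"] Cons.IH[of 1] Cons.IH[of "-1"])
qed simp

lemma stwZ_rep: "stw stZ z (replicate m Up) = z + int m" "stw stZ z (replicate m Dn) = z - int m"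
  by (induction m arbitrary: z) auto

lemma part1: "monoidal_equiv_K B_gens B_rels integer_group"
  unfolding monoidal_equiv_K_def
proof (intro exI[of _ "stw stZ 0"] conjI allI impI ballI)
  fix u v :: "orient list"
  show "stw stZ 0 u \<in> carrier integer_group" by (simp add: integer_group_def)
  show "stw stZ 0 (u @ v) = stw stZ 0 u \<otimes>\<^bsub>integer_group\<^esub> stw stZ 0 v"
    by (simp add: integer_group_def stwZ_shift[of "stw stZ 0 u"])
  assume "stw stZ 0 u = stw stZ 0 v"
  then show "\<exists>t. valid B_gens t \<and> ddom t = u \<and> dcod t = v" by (rule ZB.full)
next
  show "stw stZ 0 [] = \<one>\<^bsub>integer_group\<^esub>" by (simp add: integer_group_def)
next
  fix t assume "valid B_gens t"
  then show "stw stZ 0 (ddom t) = stw stZ 0 (dcod t)" by (rule ZB.stw_eq) simp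
next
  fix s t assume "valid B_gens s \<and> valid B_gens t \<and> ddom s = ddom t \<and> dcod s = dcod t"
  then show "eqv B_gens B_rels s t" using ZB.faithful by blast
next
  fix g :: int assume "g \<in> carrier integer_group"
  show "\<exists>u. stw stZ 0 u = g"
    by (rule exI[of _ "wordZ g"]) (auto simp: wordZ_def stwZ_rep)
qed



locale bnp = bp +
  fixes m :: nat
  assumes Vg: "VOut (Suc m) \<in> Gs" "VIn (Suc m) \<in> Gs" and Vr: "Bn_rels (Suc m) \<subseteq> Rs"
begin

abbreviation "V \<equiv> Gen (VOut (Suc m))"
abbreviation "I \<equiv> Gen (VIn (Suc m))"
abbreviation "U k \<equiv> replicate k Up"

lemma vg[simp]: "VOut (Suc m) \<in> Gs" "VIn (Suc m) \<in> Gs" using Vg by auto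

lemma rn: "(s, t) \<in> Bn_rels (Suc m) \<Longrightarrow> s \<approx> t" using Vr eqv.rel by blast

lemma IV: "Comp I V \<approx> Idt []" by (rule rn) (simp add: Bn_rels_def)
lemma VI: "Comp V I \<approx> Idt (Up # U m)" using rn[of "Comp V I" "Idt (U (Suc m))"] by (simp add: Bn_rels_def)

lemma rotV: "Comp (Comp (wh [] (Gen CupR) (Up # U m)) (wh [Dn] V [Up])) (Gen CapL) \<approx> V"
proof -
  have r: "Comp (Comp (Tens (Gen CupR) (Idt (Up # U m))) (Tens (Tens (Idt [Dn]) V) (Idt [Up]))) (Gen CapL) \<approx> V"
    by (rule rn) (simp add: Bn_rels_def)
  have "Comp (Comp (wh [] (Gen CupR) (Up # U m)) (wh [Dn] V [Up])) (Gen CapL) \<approx>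
        Comp (Comp (Tens (Gen CupR) (Idt (Up # U m))) (Tens (Tens (Idt [Dn]) V) (Idt [Up]))) (Gen CapL)"
    unfolding wh_def[of "[Dn]" V "[Up]"] by (intro cl ccong sy[OF TensR] rfl) auto
  then show ?thesis using r eqv.trans by blast
qed

lemma rotI: "Comp (Comp (Gen CupR) (wh [Dn] I [Up])) (wh [] (Gen CapL) (Up # U m)) \<approx> I"
proof -
  have r: "Comp (Comp (Gen CupR) (Tens (Tens (Idt [Dn]) I) (Idt [Up]))) (Tens (Gen CapL) (Idt (Up # U m))) \<approx> I"
    by (rule rn) (simp add: Bn_rels_def)
  have "Comp (Comp (Gen CupR) (wh [Dn] I [Up])) (wh [] (Gen CapL) (Up # U m)) \<approx>
        Comp (Comp (Gen CupR) (Tens (Tens (Idt [Dn]) I) (Idt [Up]))) (Tens (Gen CapL) (Idt (Up # U m)))"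
    unfolding wh_def[of "[Dn]" I "[Up]"] by (intro ccong sy[OF TensR] rfl) auto
  then show ?thesis using r eqv.trans by blast
qed

lemma L1: "wh [Up] V [] \<approx> wh [] V [Up]"
proof -
  let ?Un = "Up # U m"
  have "wh [Up] V [] \<approx> wh [Up] (Comp (Comp (wh [] (Gen CupR) ?Un) (wh [Dn] V [Up])) (Gen CapL)) []"
    by (rule whc, rule sy, rule rotV)
  also have "\<dots> \<approx> Comp (wh [Up] (Comp (wh [] (Gen CupR) ?Un) (wh [Dn] V [Up])) []) (wh [Up] (Gen CapL) [])"
    by (rule whC) auto
  also have "\<dots> \<approx> Comp (Comp (wh [Up] (wh [] (Gen CupR) ?Un) []) (wh [Up] (wh [Dn] V [Up]) [])) (wh [Up] (Gen CapL) [])"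
    by (intro cl whC) auto
  also have "\<dots> \<approx> Comp (Comp (wh [Up] (Gen CupR) ?Un) (wh [Up, Dn] V [Up])) (wh [] (Gen CapR) [Up])"
    by (intro ccong whwh' L0) auto
  also have "\<dots> \<approx> Comp (wh [Up] (Gen CupR) ?Un) (Comp (wh [Up, Dn] V [Up]) (wh [] (Gen CapR) [Up]))"
    by (intro assoc) auto
  also have "\<dots> \<approx> Comp (wh [Up] (Gen CupR) ?Un) (Comp (wh [] (Gen CapR) (Up # ?Un)) (wh [] V [Up]))"
  proof -
    have "Comp (wh [] (Gen CapR) (Up # ?Un)) (wh [] V [Up]) \<approx> Comp (wh [Up, Dn] V [Up]) (wh [] (Gen CapR) [Up])"
      using swap[of "Gen CapR" V "[]" "[Up]"] by simp
    note s = sy[OF this]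
    show ?thesis by (intro cr s) auto
  qed
  also have "\<dots> \<approx> Comp (Comp (wh [Up] (Gen CupR) ?Un) (wh [] (Gen CapR) (Up # ?Un))) (wh [] V [Up])"
    by (intro assoc') auto
  also have "\<dots> \<approx> Comp (Idt (Up # ?Un)) (wh [] V [Up])"
  proof -
    have "Comp (wh [Up] (Gen CupR) ?Un) (wh [] (Gen CapR) (Up # ?Un)) \<approx>
          Comp (wh [] (wh [Up] (Gen CupR) []) ?Un) (wh [] (wh [] (Gen CapR) [Up]) ?Un)"
      by (intro ccong whwh'') auto
    also have "\<dots> \<approx> Idt (Up # ?Un)" using whinv[OF zz4, of "[]" ?Un] by simp
    finally show ?thesis by (intro cl) auto
  qed
  also have "\<dots> \<approx> wh [] V [Up]" by (intro idl) auto
  finally show ?thesis .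
qed

lemma L1k: "wh (U k) V [] \<approx> wh [] V (U k)"
proof (induction k)
  case 0
  then show ?case by (simp add: rfl)
next
  case (Suc k)
  have "wh (U (Suc k)) V [] \<approx> wh [Up] (wh (U k) V []) []" using whwh''[of V "Up # U k" "[Up]" "U k" "[]" "[]"] by simp
  also have "\<dots> \<approx> wh [Up] (wh [] V (U k)) []" by (rule whc[OF Suc.IH])
  also have "\<dots> \<approx> wh [] (wh [Up] V []) (U k)"
    using eqv.trans[OF whwh'[of V "[Up]" "[Up]" "[]" "U k" "U k" "[]"] whwh''[of V "[Up]" "[]" "[Up]" "U k" "[]" "U k"]] by simp
  also have "\<dots> \<approx> wh [] (wh [] V [Up]) (U k)" by (rule whc[OF L1])
  also have "\<dots> \<approx> wh [] V (U (Suc k))" using whwh'[of V "[]" "[]" "[]" "Up # U k" "[Up]" "U k"] by simp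
  finally show ?case .
qed

end

fun stN :: "nat \<Rightarrow> nat \<Rightarrow> orient \<Rightarrow> nat" where
  "stN m k Up = (if k = m then 0 else Suc k)"
| "stN m k Dn = (if k = 0 then m else k - 1)"

fun rN :: "nat \<Rightarrow> nat \<Rightarrow> orient \<Rightarrow> dgm" where
  "rN m k Up = (if k = m then Gen (VOut (Suc m)) else Idt (replicate k Up @ [Up]))"
| "rN m k Dn = (if k = 0 then Comp (wh [Dn] (Gen (VIn (Suc m))) []) (wh [] (Gen CapL) (replicate m Up))
               else wh (replicate (k - 1) Up) (Gen CapR) [])"

fun r'N :: "nat \<Rightarrow> nat \<Rightarrow> orient \<Rightarrow> dgm" where
  "r'N m k Up = (if k = m then Gen (VIn (Suc m)) else Idt (replicate k Up @ [Up]))"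
| "r'N m k Dn = (if k = 0 then Comp (wh [] (Gen CupR) (replicate m Up)) (wh [Dn] (Gen (VOut (Suc m))) [])
               else wh (replicate (k - 1) Up) (Gen CupL) [])"

lemma rep_pred: "0 < k \<Longrightarrow> replicate k x = x # replicate (k - 1) x"
  by (cases k) auto

sublocale bnp \<subseteq> N: nf0 Gs Rs "\<lambda>k. replicate k Up" "stN m" "\<lambda>k. k \<le> m" 0 "rN m" "r'N m"
proof
  fix k x assume k: "k \<le> m"
  show "k \<le> m \<Longrightarrow> stN m k x \<le> m" by (cases x) auto
  show "valid Gs (rN m k x) \<and> ddom (rN m k x) = replicate k Up @ [x] \<and> dcod (rN m k x) = replicate (stN m k x) Up"
    using k by (cases x) (auto simp: rep_pred)
  show "valid Gs (r'N m k x) \<and> ddom (r'N m k x) = replicate (stN m k x) Up \<and> dcod (r'N m k x) = replicate k Up @ [x]"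
    using k by (cases x) (auto simp: rep_pred)
  show "Comp (rN m k x) (r'N m k x) \<approx> Idt (replicate k Up @ [x])"
  proof (cases x)
    case Up
    then show ?thesis using VI by (auto simp: idl)
  next
    case Dn
    show ?thesis
    proof (cases "k = 0")
      case False
      then show ?thesis using Dn whinv[OF i1, of "replicate (k - 1) Up" "[]"] rep_pred[of k Up] by simp
    next
      case True
      let ?U = "replicate m Up"
      let ?a = "wh [Dn] I []" and ?b = "wh [] (Gen CapL) ?U" and ?c = "wh [] (Gen CupR) ?U" and ?d = "wh [Dn] V []"
      have "Comp (Comp ?a ?b) (Comp ?c ?d) \<approx> Comp ?a (Comp ?b (Comp ?c ?d))" by (intro assoc) auto
      also have "\<dots> \<approx> Comp ?a (Comp (Comp ?b ?c) ?d)" by (intro cr assoc') auto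
      also have "\<dots> \<approx> Comp ?a (Comp (Idt (Dn # Up # ?U)) ?d)"
        by (intro cr cl) (use whinv[OF i2, of "[]" ?U] in auto)
      also have "\<dots> \<approx> Comp ?a ?d" by (intro cr idl) auto
      also have "\<dots> \<approx> Idt [Dn]" using whinv[OF IV, of "[Dn]" "[]"] by simp
      finally show ?thesis using True Dn by simp
    qed
  qed
qed auto

context bnp begin

lemma L2: "Comp (wh (U m) (Gen CupL) []) (Comp (wh [] V [Dn]) (Comp (wh [Dn] I []) (wh [] (Gen CapL) (U m)))) \<approx> Idt (U m)"
proof -
  let ?U = "U m"
  let ?f1 = "wh ?U (Gen CupL) []" and ?f2 = "wh [] V [Dn]" and ?f3 = "wh [Dn] I []" and ?f4 = "wh [] (Gen CapL) ?U"
  have stepa: "Comp ?f2 ?f3 \<approx> Comp (wh (Up # ?U @ [Dn]) I []) (wh [] V (Dn # Up # ?U))"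
  proof -
    have "Comp ?f2 ?f3 \<approx> Comp ?f2 (wh [] ?f3 [])" by (intro cr whwh'') auto
    also have "\<dots> \<approx> Comp (wh (Up # ?U) ?f3 []) (wh [] V (Dn # Up # ?U))"
      using swap[of V ?f3 "[]" "[]"] by simp
    also have "\<dots> \<approx> Comp (wh (Up # ?U @ [Dn]) I []) (wh [] V (Dn # Up # ?U))"
      by (intro cl whwh') auto
    finally show ?thesis .
  qed
  have stepb: "Comp (wh [] V (Dn # Up # ?U)) ?f4 \<approx> Comp (wh (Up # ?U) (Gen CapL) ?U) (wh [] V ?U)"
  proof -
    have "Comp (wh [] V (Dn # Up # ?U)) ?f4 \<approx> Comp (wh [] V (Dn # Up # ?U)) (wh [] ?f4 [])" by (intro cr whwh'') auto
    also have "\<dots> \<approx> Comp (wh (Up # ?U) ?f4 []) (wh [] V ?U)"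
      using swap[of V ?f4 "[]" "[]"] by simp
    also have "\<dots> \<approx> Comp (wh (Up # ?U) (Gen CapL) ?U) (wh [] V ?U)"
      by (intro cl whwh') auto
    finally show ?thesis .
  qed
  have stepc: "Comp ?f1 (wh (Up # ?U @ [Dn]) I []) \<approx> Comp (wh ?U I []) (wh ?U (Gen CupL) (Up # ?U))"
    using swap[of "Gen CupL" I ?U "[]"] by simp
  have stepd: "Comp (wh ?U (Gen CupL) (Up # ?U)) (wh (Up # ?U) (Gen CapL) ?U) \<approx> Idt (?U @ Up # ?U)"
  proof -
    have "Comp (wh ?U (Gen CupL) (Up # ?U)) (wh (Up # ?U) (Gen CapL) ?U) \<approx>
          Comp (wh ?U (wh [] (Gen CupL) [Up]) ?U) (wh ?U (wh [Up] (Gen CapL) []) ?U)"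
      by (intro ccong whwh'') auto
    also have "\<dots> \<approx> Idt (?U @ Up # ?U)" using whinv[OF zz1, of ?U ?U] by simp
    finally show ?thesis .
  qed
  have "Comp ?f1 (Comp ?f2 (Comp ?f3 ?f4)) \<approx> Comp ?f1 (Comp (Comp ?f2 ?f3) ?f4)" by (intro cr assoc') auto
  also have "\<dots> \<approx> Comp ?f1 (Comp (Comp (wh (Up # ?U @ [Dn]) I []) (wh [] V (Dn # Up # ?U))) ?f4)"
    by (intro cr cl stepa) auto
  also have "\<dots> \<approx> Comp ?f1 (Comp (wh (Up # ?U @ [Dn]) I []) (Comp (wh [] V (Dn # Up # ?U)) ?f4))"
    by (intro cr assoc) auto
  also have "\<dots> \<approx> Comp ?f1 (Comp (wh (Up # ?U @ [Dn]) I []) (Comp (wh (Up # ?U) (Gen CapL) ?U) (wh [] V ?U)))"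
    by (intro cr stepb) auto
  also have "\<dots> \<approx> Comp (Comp ?f1 (wh (Up # ?U @ [Dn]) I [])) (Comp (wh (Up # ?U) (Gen CapL) ?U) (wh [] V ?U))"
    by (intro assoc') auto
  also have "\<dots> \<approx> Comp (Comp (wh ?U I []) (wh ?U (Gen CupL) (Up # ?U))) (Comp (wh (Up # ?U) (Gen CapL) ?U) (wh [] V ?U))"
    by (intro cl stepc) auto
  also have "\<dots> \<approx> Comp (wh ?U I []) (Comp (wh ?U (Gen CupL) (Up # ?U)) (Comp (wh (Up # ?U) (Gen CapL) ?U) (wh [] V ?U)))"
    by (intro assoc) auto
  also have "\<dots> \<approx> Comp (wh ?U I []) (Comp (Comp (wh ?U (Gen CupL) (Up # ?U)) (wh (Up # ?U) (Gen CapL) ?U)) (wh [] V ?U))"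
    by (intro cr assoc') auto
  also have "\<dots> \<approx> Comp (wh ?U I []) (Comp (Idt (?U @ Up # ?U)) (wh [] V ?U))"
    by (intro cr cl stepd) auto
  also have "\<dots> \<approx> Comp (wh ?U I []) (wh [] V ?U)"
    by (intro cr idl) auto
  also have "\<dots> \<approx> Comp (wh ?U I []) (wh ?U V [])"
    by (intro cr sy[OF L1k]) auto
  also have "\<dots> \<approx> Idt ?U" using whinv[OF IV, of ?U "[]"] by simp
  finally show ?thesis .
qed

lemma L3: "Comp (wh [] (Gen CupR) []) (Comp (wh [] (Comp (wh [Dn] I []) (wh [] (Gen CapL) (U m))) [Up]) V) \<approx> Idt []"
proof -
  let ?U = "U m"
  have "Comp (wh [] (Gen CupR) []) (Comp (wh [] (Comp (wh [Dn] I []) (wh [] (Gen CapL) ?U)) [Up]) V) \<approx>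
        Comp (Gen CupR) (Comp (wh [] (Comp (wh [Dn] I []) (wh [] (Gen CapL) ?U)) [Up]) V)"
    by (intro cl wh0) auto
  also have "\<dots> \<approx> Comp (Gen CupR) (Comp (Comp (wh [Dn] I [Up]) (wh [] (Gen CapL) (Up # ?U))) V)"
  proof -
    have "wh [] (Comp (wh [Dn] I []) (wh [] (Gen CapL) ?U)) [Up] \<approx> Comp (wh [] (wh [Dn] I []) [Up]) (wh [] (wh [] (Gen CapL) ?U) [Up])"
      by (intro whC) auto
    also have "\<dots> \<approx> Comp (wh [Dn] I [Up]) (wh [] (Gen CapL) (Up # ?U))"
      by (intro ccong whwh') auto
    finally have e: "wh [] (Comp (wh [Dn] I []) (wh [] (Gen CapL) ?U)) [Up] \<approx> Comp (wh [Dn] I [Up]) (wh [] (Gen CapL) (Up # ?U))" .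
    show ?thesis by (intro cr cl e) auto
  qed
  also have "\<dots> \<approx> Comp (Comp (Gen CupR) (Comp (wh [Dn] I [Up]) (wh [] (Gen CapL) (Up # ?U)))) V"
    by (intro assoc') auto
  also have "\<dots> \<approx> Comp (Comp (Comp (Gen CupR) (wh [Dn] I [Up])) (wh [] (Gen CapL) (Up # ?U))) V"
    by (intro cl assoc') auto
  also have "\<dots> \<approx> Comp I V" by (intro cl rotI) auto
  also have "\<dots> \<approx> Idt []" by (rule IV)
  finally show ?thesis .
qed

end

context bnp begin

lemma genN_CupL: "k \<le> m \<Longrightarrow> Comp (wh (U k) (Gen CupL) []) (N.R k [Up, Dn]) \<approx> N.R k []"
proof -
  assume k: "k \<le> m"
  have r2: "N.R k [Up, Dn] \<approx> Comp (wh [] (rN m k Up) [Dn]) (rN m (stN m k Up) Dn)"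
    using N.R2[of k Up Dn] k by simp
  note t = N.R_ty[OF k, of "[Up, Dn]"]
  show ?thesis
  proof (cases "k = m")
    case True
    have e: "N.R m [Up, Dn] \<approx> Comp (wh [] V [Dn]) (Comp (wh [Dn] I []) (wh [] (Gen CapL) (U m)))"
      using r2 True by simp
    have "Comp (wh (U m) (Gen CupL) []) (N.R m [Up, Dn]) \<approx> Comp (wh (U m) (Gen CupL) []) (Comp (wh [] V [Dn]) (Comp (wh [Dn] I []) (wh [] (Gen CapL) (U m))))"
      by (intro cr e) (use t True in auto)
    also have "\<dots> \<approx> Idt (U m)" by (rule L2)
    finally show ?thesis using True by simp
  next
    case False
    have ru: "rN m k Up = Idt (U k @ [Up])" and rd: "rN m (stN m k Up) Dn = wh (U k) (Gen CapR) []" using False by auto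
    have "Comp (wh [] (rN m k Up) [Dn]) (rN m (stN m k Up) Dn) \<approx> Comp (Idt (U k @ [Up, Dn])) (wh (U k) (Gen CapR) [])"
      unfolding ru rd by (intro cl) (use whI[of "[]" "U k @ [Up]" "[Dn]"] in auto)
    also have "\<dots> \<approx> wh (U k) (Gen CapR) []" by (intro idl) auto
    finally have e: "N.R k [Up, Dn] \<approx> wh (U k) (Gen CapR) []" using r2 eqv.trans by blast
    have "Comp (wh (U k) (Gen CupL) []) (N.R k [Up, Dn]) \<approx> Comp (wh (U k) (Gen CupL) []) (wh (U k) (Gen CapR) [])"
      by (intro cr e) (use t in auto)
    also have "\<dots> \<approx> Idt (U k)" using whinv[OF c1, of "U k" "[]"] by simp
    finally show ?thesis by simp
  qed
qed

lemma genN_CupR: "k \<le> m \<Longrightarrow> Comp (wh (U k) (Gen CupR) []) (N.R k [Dn, Up]) \<approx> N.R k []"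
proof -
  assume k: "k \<le> m"
  have r2: "N.R k [Dn, Up] \<approx> Comp (wh [] (rN m k Dn) [Up]) (rN m (stN m k Dn) Up)"
    using N.R2[of k Dn Up] k by simp
  note t = N.R_ty[OF k, of "[Dn, Up]"]
  show ?thesis
  proof (cases k)
    case 0
    have e: "N.R 0 [Dn, Up] \<approx> Comp (wh [] (Comp (wh [Dn] I []) (wh [] (Gen CapL) (U m))) [Up]) V"
      using r2 0 by simp
    have "Comp (wh [] (Gen CupR) []) (N.R 0 [Dn, Up]) \<approx> Comp (wh [] (Gen CupR) []) (Comp (wh [] (Comp (wh [Dn] I []) (wh [] (Gen CapL) (U m))) [Up]) V)"
      by (intro cr e) (use t 0 in auto)
    also have "\<dots> \<approx> Idt []" by (rule L3)
    finally show ?thesis using 0 by simp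
  next
    case (Suc j)
    have ru: "rN m k Dn = wh (U j) (Gen CapR) []" and rd: "rN m (stN m k Dn) Up = Idt (U j @ [Up])"
      using Suc k by auto
    have "Comp (wh [] (rN m k Dn) [Up]) (rN m (stN m k Dn) Up) \<approx> wh [] (wh (U j) (Gen CapR) []) [Up]"
      unfolding ru rd by (intro idr) auto
    also have "\<dots> \<approx> wh (U j) (wh [] (Gen CapR) [Up]) []"
      by (intro eqv.trans[OF whwh'] whwh'') auto
    finally have e: "N.R k [Dn, Up] \<approx> wh (U j) (wh [] (Gen CapR) [Up]) []" using r2 eqv.trans by blast
    have "Comp (wh (U k) (Gen CupR) []) (N.R k [Dn, Up]) \<approx> Comp (wh (U j) (wh [Up] (Gen CupR) []) []) (wh (U j) (wh [] (Gen CapR) [Up]) [])"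
      by (intro ccong e whwh'') (use t Suc in auto)
    also have "\<dots> \<approx> Idt (U j @ [Up])" using whinv[OF zz4, of "U j" "[]"] by simp
    finally show ?thesis using Suc by simp
  qed
qed

lemma Rup: "k + j \<le> m \<Longrightarrow> N.R k (U j @ b) \<approx> N.R (k + j) b"
proof (induction j arbitrary: k)
  case 0
  then show ?case using N.R_ty[of k b] by (simp add: rfl)
next
  case (Suc j)
  have km: "k \<noteq> m" "k \<le> m" using Suc.prems by auto
  have ih: "N.R (Suc k) (U j @ b) \<approx> N.R (k + Suc j) b" using Suc.IH[of "Suc k"] Suc.prems by simp
  note t = N.R_ty[of "Suc k" "U j @ b"]
  have "N.R k (U (Suc j) @ b) = Comp (wh [] (Idt (U k @ [Up])) (U j @ b)) (N.R (Suc k) (U j @ b))"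
    using km by simp
  also have "\<dots> \<approx> Comp (Idt (U k @ Up # U j @ b)) (N.R (Suc k) (U j @ b))"
    by (intro cl) (use whI[of "[]" "U k @ [Up]" "U j @ b"] t Suc.prems in auto)
  also have "\<dots> \<approx> N.R (Suc k) (U j @ b)" by (intro idl) (use t Suc.prems in auto)
  also have "\<dots> \<approx> N.R (k + Suc j) b" by (rule ih)
  finally show ?case .
qed

lemma genN_VOut: "k \<le> m \<Longrightarrow> Comp (wh (U k) V []) (N.R k []) \<approx> N.R k (Up # U m)"
proof -
  assume k: "k \<le> m"
  have l: "Up # U m = U (m - k) @ Up # U k" using k
    by (simp add: replicate_add[symmetric])
  have "N.R k (Up # U m) = N.R k (U (m - k) @ Up # U k)" by (simp only: l)
  also have "\<dots> \<approx> N.R m (Up # U k)" using Rup[of k "m - k" "Up # U k"] k by simp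
  also have "\<dots> = Comp (wh [] V (U k)) (N.R 0 (U k))" by simp
  also have "\<dots> \<approx> Comp (wh [] V (U k)) (N.R k [])"
    by (intro cr) (use Rup[of 0 k "[]"] k N.R_ty[of 0 "U k"] in auto)
  also have "\<dots> = Comp (wh [] V (U k)) (Idt (U k))" by simp
  also have "\<dots> \<approx> wh [] V (U k)" by (intro idr) auto
  also have "\<dots> \<approx> wh (U k) V []" by (rule sy[OF L1k])
  finally have e: "N.R k (Up # U m) \<approx> wh (U k) V []" .
  have "Comp (wh (U k) V []) (Idt (U k)) \<approx> wh (U k) V []" by (intro idr) auto
  then have "Comp (wh (U k) V []) (N.R k []) \<approx> wh (U k) V []" by simp
  then show ?thesis using sy[OF e] eqv.trans by blast
qed

lemma genN: "k \<le> m \<Longrightarrow> g \<in> Bn_gens (Suc m) \<Longrightarrow>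
  Comp (wh (U k) (Gen g) []) (N.R k (gcod g)) \<approx> N.R k (gdom g)"
proof -
  assume k: "k \<le> m" and g: "g \<in> Bn_gens (Suc m)"
  have a: "Comp (wh (U k) (Gen CupL) []) (N.R k (gcod CupL)) \<approx> N.R k (gdom CupL)"
    using genN_CupL[OF k] by simp
  have b: "Comp (wh (U k) (Gen CupR) []) (N.R k (gcod CupR)) \<approx> N.R k (gdom CupR)"
    using genN_CupR[OF k] by simp
  have c: "Comp (wh (U k) (Gen CapR) []) (N.R k (gcod CapR)) \<approx> N.R k (gdom CapR)"
    by (rule N.pair[OF k _ _ _ _ _ a]) (use i1 in auto)
  have d: "Comp (wh (U k) (Gen CapL) []) (N.R k (gcod CapL)) \<approx> N.R k (gdom CapL)"
    by (rule N.pair[OF k _ _ _ _ _ b]) (use i2 in auto)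
  have e: "Comp (wh (U k) (Gen (VOut (Suc m))) []) (N.R k (gcod (VOut (Suc m)))) \<approx> N.R k (gdom (VOut (Suc m)))"
    using genN_VOut[OF k] by simp
  have f: "Comp (wh (U k) (Gen (VIn (Suc m))) []) (N.R k (gcod (VIn (Suc m)))) \<approx> N.R k (gdom (VIn (Suc m)))"
    by (rule N.pair[OF k _ _ _ _ _ e]) (use IV in auto)
  show ?thesis using g a b c d e f by (auto simp: Bn_gens_def B_gens_def)
qed

end

lemma Bn_wf: "(s, t) \<in> Bn_rels n \<Longrightarrow> valid (Bn_gens n) s \<and> valid (Bn_gens n) t \<and> ddom s = ddom t \<and> dcod s = dcod t"
  by (auto simp: Bn_rels_def B_rels_def Bn_gens_def B_gens_def)

lemma stN_mod: "k \<le> m \<Longrightarrow> stN m k x = (k + (if x = Up then 1 else m)) mod Suc m"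
proof (cases x)
  case Up
  assume "k \<le> m" then show ?thesis using Up by (cases "k = m") auto
next
  case Dn
  assume k: "k \<le> m"
  show ?thesis
  proof (cases k)
    case 0 then show ?thesis using Dn by simp
  next
    case (Suc j)
    then have "k + m = j + Suc m" by simp
    then have "(k + m) mod Suc m = (j + Suc m) mod Suc m" by simp
    also have "\<dots> = j"
    proof -
      have "j < Suc m" using k Suc by simp
      then show ?thesis by (metis mod_add_self2 mod_less)
    qed
    finally have "(k + m) mod Suc m = j" .
    then show ?thesis using Dn Suc by simp
  qed
qed

lemma stN_le: "k \<le> m \<Longrightarrow> stN m k x \<le> m" by (cases x) auto

lemma stwN_le: "k \<le> m \<Longrightarrow> stw (stN m) k u \<le> m"
  by (induction u arbitrary: k) (auto simp: stN_le)

lemma stwN_mod: "k \<le> m \<Longrightarrow> stw (stN m) k u = (k + stw (stN m) 0 u) mod Suc m"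
proof (induction u arbitrary: k)
  case Nil then show ?case by simp
next
  case (Cons x u)
  let ?d = "if x = Up then 1 else m" and ?S = "stw (stN m) 0 u"
  have "stw (stN m) k (x # u) = (stN m k x + ?S) mod Suc m"
    using Cons.IH[OF stN_le[OF Cons.prems]] by simp
  also have "\<dots> = ((k + ?d) mod Suc m + ?S) mod Suc m" using stN_mod[OF Cons.prems] by simp
  also have "\<dots> = (k + ?d + ?S) mod Suc m" by (simp add: mod_add_left_eq)
  also have "\<dots> = (k + (?d mod Suc m + ?S) mod Suc m) mod Suc m"
    by (simp add: mod_add_left_eq mod_add_right_eq add.assoc)
  also have "\<dots> = (k + stw (stN m) 0 (x # u)) mod Suc m"
    using Cons.IH[OF stN_le[of 0 m x]] stN_mod[of 0 m x] by simp
  finally show ?case .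
qed

lemma stwN_rep: "k + j \<le> m \<Longrightarrow> stw (stN m) k (replicate j Up) = k + j"
  by (induction j arbitrary: k) auto

lemma part2: "monoidal_equiv_K (Bn_gens (Suc m)) (Bn_rels (Suc m)) (integer_mod_group (Suc m))"
proof -
  interpret bnp "Bn_gens (Suc m)" "Bn_rels (Suc m)" m
    by unfold_locales (erule Bn_wf | auto simp: Bn_gens_def Bn_rels_def)+
  interpret NN: nf "Bn_gens (Suc m)" "Bn_rels (Suc m)" "\<lambda>k. replicate k Up" "stN m" "\<lambda>k. k \<le> m" 0 "rN m" "r'N m"
    by unfold_locales (rule genN)
  let ?F = "\<lambda>u. int (stw (stN m) 0 u)"
  show ?thesis
    unfolding monoidal_equiv_K_def
  proof (intro exI[of _ ?F] conjI allI impI ballI)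
    fix u v :: "orient list"
    show "?F u \<in> carrier (integer_mod_group (Suc m))"
      using stwN_le[of 0 m u] by (simp add: integer_mod_group_def)
    show "?F (u @ v) = ?F u \<otimes>\<^bsub>integer_mod_group (Suc m)\<^esub> ?F v"
      using stwN_mod[OF stwN_le[of 0 m u], of v] by (simp add: integer_mod_group_def of_nat_mod)
    assume "?F u = ?F v"
    then have "stw (stN m) 0 u = stw (stN m) 0 v" by simp
    then show "\<exists>t. valid (Bn_gens (Suc m)) t \<and> ddom t = u \<and> dcod t = v" by (rule NN.full)
  next
    show "?F [] = \<one>\<^bsub>integer_mod_group (Suc m)\<^esub>" by (simp add: integer_mod_group_def)
  next
    fix t assume "valid (Bn_gens (Suc m)) t"
    then show "?F (ddom t) = ?F (dcod t)" using NN.stw_eq by simp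
  next
    fix s t assume "valid (Bn_gens (Suc m)) s \<and> valid (Bn_gens (Suc m)) t \<and> ddom s = ddom t \<and> dcod s = dcod t"
    then show "eqv (Bn_gens (Suc m)) (Bn_rels (Suc m)) s t" using NN.faithful by blast
  next
    fix g :: int assume "g \<in> carrier (integer_mod_group (Suc m))"
    then have g: "0 \<le> g" "g < int (Suc m)" by (auto simp: integer_mod_group_def)
    show "\<exists>u. ?F u = g"
      by (rule exI[of _ "replicate (nat g) Up"]) (use g stwN_rep[of 0 "nat g" m] in auto)
  qed
qed

theorem theoremB1:
  shows "monoidal_equiv_K B_gens B_rels integer_group \<and>
         (\<forall>n::nat. n \<ge> 2 \<longrightarrow> monoidal_equiv_K (Bn_gens n) (Bn_rels n) (integer_mod_group n))"
proof (intro conjI allI impI)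
  show "monoidal_equiv_K B_gens B_rels integer_group" by (rule part1)
  fix n :: nat assume "n \<ge> 2"
  then obtain m where "n = Suc m" by (cases n) auto
  then show "monoidal_equiv_K (Bn_gens n) (Bn_rels n) (integer_mod_group n)" using part2 by simp
qed

end
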